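(* Let $g \in L^2(\mathbb{R})$ be a non-zero real-valued function with $\|g\|_2 = 1$. Let $\alpha = V_g g(0,1)$ and $$A = \begin{bmatrix} 1 & \alpha \\ \overline{\alpha} & 1 \end{bmatrix}, \qquad u(a,b) = \begin{bmatrix} V_g g(a,b) \\ V_g g(a, b-1)\end{bmatrix}, \qquad F(a,b) = \langle A^{-1} u(a,b), u(a,b)\rangle \quad ((a,b)\in\mathbb{R}^2).$$ Then $F(0,0) = F(0,1) = 1$, and $F(a,b) < 1$ for every $(a,b) \in \mathbb{Z}^2 \setminus \{(0,0),(0,1)\}$; that is, restricted to $\mathbb{Z}^2$, $F$ attains its global maximum value $1$ only at $(0,0)$ and $(0,1)$. Consequently, for every $(a,b) \in \mathbb{Z}^2 \setminus \{(0,0),(0,1)\}$, the functions $g(x)$, $e^{2\pi i x} g(x)$, $e^{2\pi i b x} g(x-a)$ are linearly independent in $L^2(\mathbb{R})$.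
   Context: The short-time Fourier transform of $f \in L^2(\mathbb{R})$ with window $g \in L^2(\mathbb{R})$ is $V_g f(x,y) = \int_{\mathbb{R}} f(t)\overline{g(t-x)} e^{-2\pi i y t}\,dt$. The inner product on $\mathbb{C}^2$ is $\langle v, w\rangle = \sum_j v_j \overline{w_j}$. Here $|\alpha|<1$, so $A$ is invertible (indeed positive definite), and $A$ is the Gramian of $\{g, e^{2\pi i \cdot} g\}$; $F(a,b)\in[0,1]$ for all $(a,b)$. *)

theory Defs
  imports "HOL-Analysis.Analysis"
begin

definition stft :: "(real \<Rightarrow> complex) \<Rightarrow> (real \<Rightarrow> complex) \<Rightarrow> real \<Rightarrow> real \<Rightarrow> complex" where
  "stft g f x y = (\<integral>t. f t * cnj (g (t - x)) * cis (- 2 * pi * y * t) \<partial>lborel)"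

definition cinner2 :: "complex^2 \<Rightarrow> complex^2 \<Rightarrow> complex" where
  "cinner2 v w = (\<Sum>j\<in>UNIV. v $ j * cnj (w $ j))"

definition gramA :: "complex \<Rightarrow> complex^2^2" where
  "gramA \<alpha> = vector [vector [1, \<alpha>], vector [cnj \<alpha>, 1]]"

definition uvec :: "(real \<Rightarrow> real) \<Rightarrow> real \<Rightarrow> real \<Rightarrow> complex^2" where
  "uvec g a b = vector [stft (\<lambda>t. of_real (g t)) (\<lambda>t. of_real (g t)) a b,
                        stft (\<lambda>t. of_real (g t)) (\<lambda>t. of_real (g t)) a (b - 1)]"

definition Ffun :: "(real \<Rightarrow> real) \<Rightarrow> real \<Rightarrow> real \<Rightarrow> complex" where
  "Ffun g a b = (let \<alpha> = stft (\<lambda>t. of_real (g t)) (\<lambda>t. of_real (g t)) 0 1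
                 in cinner2 (matrix_inv (gramA \<alpha>) *v uvec g a b) (uvec g a b))"

end

theory Submission
  imports Defs "HOL-Computational_Algebra.Polynomial"
begin


lemma matrix_inv_eqI:
  fixes A B :: "'a::comm_ring_1^'n^'n"
  assumes "A ** B = mat 1" "B ** A = mat 1"
  shows "matrix_inv A = B"
proof -
  have ex: "\<exists>A'. A ** A' = mat 1 \<and> A' ** A = mat 1" using assms by blast
  define C where "C = matrix_inv A"
  have C: "A ** C = mat 1 \<and> C ** A = mat 1"
    unfolding C_def matrix_inv_def by (rule someI_ex[OF ex])
  have "C = C ** (A ** B)" using assms by (simp add: matrix_mul_rid)
  also have "\<dots> = (C ** A) ** B" by (simp add: matrix_mul_assoc)
  also have "\<dots> = B" using C by (simp add: matrix_mul_lid)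
  finally show ?thesis unfolding C_def .
qed

lemma gram_inv:
  assumes d: "d = 1 - \<alpha> * cnj \<alpha>" "d \<noteq> 0"
  shows "matrix_inv (gramA \<alpha>) = vector [vector [1/d, -\<alpha>/d], vector [- cnj \<alpha>/d, 1/d]]"
  apply (rule matrix_inv_eqI)
  using d by (auto simp: gramA_def matrix_matrix_mult_def mat_def vec_eq_iff forall_2 sum_2 field_simps)

lemma F_formula:
  assumes d: "d = 1 - \<alpha> * cnj \<alpha>" "d \<noteq> 0"
  shows "cinner2 (matrix_inv (gramA \<alpha>) *v vector [u1, u2]) (vector [u1, u2])
     = ((u1 - \<alpha>*u2)*cnj u1 + (u2 - cnj \<alpha>*u1)*cnj u2)/d"
  using d by (simp add: gram_inv[OF d] cinner2_def matrix_vector_mult_def sum_2 field_simps)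



lemma ind_sum_le1:
  fixes a y j :: real
  assumes a: "\<bar>a\<bar> \<ge> 1"
  shows "(\<Sum>n\<in>{1..N::nat}. indicator {j..<j+1} (real n * a + y)) \<le> (1::real)"
proof -
  have eq: "(\<Sum>n\<in>{1..N::nat}. indicator {j..<j+1} (real n * a + y)) =
     (\<Sum>n\<in>{1..N::nat}. indicator {n. real n * a + y \<in> {j..<j+1}} n :: real)"
    by (intro sum.cong) (auto simp: indicator_def)
  have c: "card ({1..N} \<inter> {n. real n * a + y \<in> {j..<j+1}}) \<le> Suc 0"
  proof (subst card_le_Suc0_iff_eq, simp, intro ballI)
    fix n m assume n: "n \<in> {1..N} \<inter> {n. real n * a + y \<in> {j..<j+1}}"
      and m: "m \<in> {1..N} \<inter> {n. real n * a + y \<in> {j..<j+1}}"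
    have "\<bar>(real n - real m) * a\<bar> < 1" using n m by (auto simp: algebra_simps abs_less_iff)
    hence "\<bar>real n - real m\<bar> * \<bar>a\<bar> < 1" by (simp add: abs_mult)
    moreover have "\<bar>real n - real m\<bar> * \<bar>a\<bar> \<ge> \<bar>real n - real m\<bar>"
      using a by (simp add: mult_le_cancel_left1)
    ultimately have "\<bar>real n - real m\<bar> < 1" by linarith
    thus "n = m" by linarith
  qed
  have "(\<Sum>n\<in>{1..N::nat}. indicator {n. real n * a + y \<in> {j..<j+1}} n :: real)
     = (\<Sum>n\<in>{1..N::nat}. 1 * indicator {n. real n * a + y \<in> {j..<j+1}} n :: real)" by simp
  also have "\<dots> = real (card ({1..N} \<inter> {n. real n * a + y \<in> {j..<j+1}}))"
    by (subst sum_mult_indicator) (auto intro!: arg_cong[where f=card])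
  finally show ?thesis unfolding eq using c by simp
qed

lemma periodic_null:
  fixes T \<phi> :: "real \<Rightarrow> real" and a :: real
  assumes [measurable]: "T \<in> borel_measurable borel" "\<phi> \<in> borel_measurable borel"
    and Tint: "integrable lborel T"
    and Tnn: "\<And>x. T x \<ge> 0" and \<phi>nn: "\<And>x. \<phi> x \<ge> 0"
    and a: "\<bar>a\<bar> \<ge> 1"
    and per: "\<And>x. \<phi> (x + a) = \<phi> x"
    and rel: "AE x in lborel. T (x - a) = \<phi> x * T x"
  shows "AE x in lborel. T x = 0"
proof -
  have perm: "\<phi> (x - real n * a) = \<phi> x" for x n
  proof (induction n arbitrary: x)
    case (Suc n)
    have "\<phi> (x - real (Suc n) * a) = \<phi> ((x - real (Suc n) * a) + a)" by (rule per[symmetric])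
    also have "\<dots> = \<phi> (x - real n * a)" by (simp add: algebra_simps)
    finally show ?case using Suc by simp
  qed simp
  have perm': "\<phi> (x - a * real n) = \<phi> x" for x n using perm[of x n] by (simp add: mult.commute)
  have step1: "AE x in lborel. T (x - real n * a) = \<phi> x ^ n * T x" for n
  proof (induction n)
    case (Suc n)
    have "AE x in lborel. T ((- (real n * a) + 1 * x) - a) = \<phi> (- (real n * a) + 1 * x) * T (- (real n * a) + 1 * x)"
      by (rule AE_borel_affine) (use rel in auto)
    then show ?case using Suc
      by eventually_elim (simp add: perm perm' algebra_simps)
  qed simp
  have step2: "AE x in lborel. T x = \<phi> x ^ n * T (x + real n * a)" for n
  proof -
    have "AE x in lborel. T ((real n * a + 1 * x) - real n * a) = \<phi> (real n * a + 1 * x) ^ n * T (real n * a + 1 * x)"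
      by (rule AE_borel_affine) (use step1[of n] in auto)
    moreover have h: "\<phi> (real n * a + x) = \<phi> x" for x
      using perm[of "real n * a + x" n] by simp
    ultimately show ?thesis by (simp add: h algebra_simps)
  qed
  have key: "AE x in lborel. \<forall>n. T x \<le> T (x - real n * a) + T (x + real n * a)"
  proof -
    have "AE x in lborel. \<forall>n. T (x - real n * a) = \<phi> x ^ n * T x \<and> T x = \<phi> x ^ n * T (x + real n * a)"
      using step1 step2 by (subst AE_all_countable) (auto intro: AE_conjI)
    then show ?thesis
    proof eventually_elim
      case (elim x)
      show ?case
      proof
        fix n
        show "T x \<le> T (x - real n * a) + T (x + real n * a)"
        proof (cases "\<phi> x \<ge> 1")
          case True
          hence "1 \<le> \<phi> x ^ n" by (rule one_le_power)
          hence "T x \<le> \<phi> x ^ n * T x" using Tnn[of x] by (simp add: mult_le_cancel_right1)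
          thus ?thesis using elim Tnn[of "x + real n * a"] by simp
        next
          case False
          hence "\<phi> x ^ n \<le> 1" using \<phi>nn[of x] by (simp add: power_le_one)
          hence "\<phi> x ^ n * T (x + real n * a) \<le> T (x + real n * a)"
            using Tnn[of "x + real n * a"] by (intro mult_left_le_one_le) (auto simp: \<phi>nn)
          thus ?thesis using elim Tnn[of "x - real n * a"] by simp
        qed
      qed
    qed
  qed
  have intT: "integrable lborel (\<lambda>x. T (t + x))" for t
    using lborel_integrable_real_affine[OF Tint, of 1 t] by simp
  have shiftint: "(\<integral>x. T (x + s) * indicator I x \<partial>lborel) = (\<integral>y. T y * indicator I (y - s) \<partial>lborel)"
    for s and I :: "real set"
    using lborel_integral_real_affine[of 1 "\<lambda>x. T (x + s) * indicator I x" "-s"]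
    by (simp add: algebra_simps)
  have bound: "(\<Sum>n\<in>{1..N}. \<integral>x. T (x + real n * c) * indicator {j..<j+1} x \<partial>lborel) \<le> (\<integral>x. T x \<partial>lborel)"
    if c: "\<bar>c\<bar> \<ge> 1" for N :: nat and c j :: real
  proof -
    have "(\<Sum>n\<in>{1..N}. \<integral>x. T (x + real n * c) * indicator {j..<j+1} x \<partial>lborel)
       = (\<Sum>n\<in>{1..N}. \<integral>y. T y * indicator {j..<j+1} (y - real n * c) \<partial>lborel)"
      by (simp add: shiftint)
    also have "\<dots> = (\<Sum>n\<in>{1..N}. \<integral>y. T y * indicator {j + real n * c..<j+1 + real n * c} y \<partial>lborel)"
      by (intro sum.cong refl arg_cong[where f="integral\<^sup>L lborel"] ext) (auto simp: indicator_def)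
    also have "\<dots> = (\<integral>y. (\<Sum>n\<in>{1..N}. T y * indicator {j + real n * c..<j+1 + real n * c} y) \<partial>lborel)"
      by (subst integral_sum') (auto intro!: integrable_real_mult_indicator Tint simp: simp_implies_def)
    also have "\<dots> = (\<integral>y. (\<Sum>n\<in>{1..N}. T y * indicator {j..<j+1} (y - real n * c)) \<partial>lborel)"
      by (intro sum.cong refl arg_cong[where f="integral\<^sup>L lborel"] ext) (auto simp: indicator_def)
    also have "\<dots> \<le> (\<integral>x. T x \<partial>lborel)"
    proof (rule integral_mono)
      have "integrable lborel (\<lambda>y. \<Sum>n\<in>{1..N}. T y * indicator {j + real n * c..<j+1 + real n * c} y)"
        by (intro Bochner_Integration.integrable_sum integrable_real_mult_indicator Tint) auto
      moreover have "(\<lambda>y. \<Sum>n\<in>{1..N}. T y * indicator {j + real n * c..<j+1 + real n * c} y) =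
         (\<lambda>y. \<Sum>n\<in>{1..N}. T y * indicator {j..<j+1} (y - real n * c))"
        by (intro ext sum.cong) (auto simp: indicator_def)
      ultimately show "integrable lborel (\<lambda>y. \<Sum>n\<in>{1..N}. T y * indicator {j..<j+1} (y - real n * c))"
        by simp
      fix y
      have "(\<Sum>n\<in>{1..N}. indicator {j..<j+1} (real n * (-c) + y)) \<le> (1::real)"
        by (rule ind_sum_le1) (use c in simp)
      hence "T y * (\<Sum>n\<in>{1..N}. indicator {j..<j+1} (y - real n * c)) \<le> T y * 1"
        using Tnn[of y] by (intro mult_left_mono) (auto simp: algebra_simps)
      thus "(\<Sum>n\<in>{1..N}. T y * indicator {j..<j+1} (y - real n * c)) \<le> T y"
        by (simp add: sum_distrib_left)
    qed (use Tint in auto)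
    finally show ?thesis .
  qed
  have zero: "AE x in lborel. x \<in> {j..<j+1} \<longrightarrow> T x = 0" for j :: int
  proof -
    define I where "I = {real_of_int j..<real_of_int j+1}"
    define S where "S = (\<integral>x. T x * indicator I x \<partial>lborel)"
    have Snn: "S \<ge> 0" unfolding S_def by (intro integral_nonneg_AE AE_I2) (auto simp: Tnn)
    have intI: "integrable lborel (\<lambda>x. T (x + s) * indicator I x)" for s
      using intT[of s] by (intro integrable_real_mult_indicator) (auto simp: I_def add.commute)
    have NS: "real N * S \<le> 2 * (\<integral>x. T x \<partial>lborel)" for N
    proof -
      have "real N * S = (\<Sum>n\<in>{1..N}. \<integral>x. T x * indicator I x \<partial>lborel)" by (simp add: S_def)
      also have "\<dots> \<le> (\<Sum>n\<in>{1..N}. (\<integral>x. T (x + real n * (-a)) * indicator I x \<partial>lborel) +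
                        (\<integral>x. T (x + real n * a) * indicator I x \<partial>lborel))"
      proof (rule sum_mono)
        fix n assume "n \<in> {1..N}"
        have "(\<integral>x. T x * indicator I x \<partial>lborel) \<le>
              (\<integral>x. T (x + real n * (-a)) * indicator I x + T (x + real n * a) * indicator I x \<partial>lborel)"
        proof (rule integral_mono_AE)
          show "integrable lborel (\<lambda>x. T x * indicator I x)" using intI[of 0] by simp
          show "integrable lborel (\<lambda>x. T (x + real n * (-a)) * indicator I x + T (x + real n * a) * indicator I x)"
            by (rule Bochner_Integration.integrable_add[OF intI intI])
          show "AE x in lborel. T x * indicator I x \<le> T (x + real n * (-a)) * indicator I x + T (x + real n * a) * indicator I x"
            using key by eventually_elim (auto simp: indicator_def)
        qed
        also have "\<dots> = (\<integral>x. T (x + real n * (-a)) * indicator I x \<partial>lborel) + (\<integral>x. T (x + real n * a) * indicator I x \<partial>lborel)"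
          by (rule Bochner_Integration.integral_add[OF intI intI])
        finally show "(\<integral>x. T x * indicator I x \<partial>lborel) \<le> \<dots>" .
      qed
      also have "\<dots> = (\<Sum>n\<in>{1..N}. (\<integral>x. T (x + real n * (-a)) * indicator I x \<partial>lborel)) +
                     (\<Sum>n\<in>{1..N}. (\<integral>x. T (x + real n * a) * indicator I x \<partial>lborel))"
        by (simp add: sum.distrib)
      also have "\<dots> \<le> (\<integral>x. T x \<partial>lborel) + (\<integral>x. T x \<partial>lborel)"
        unfolding I_def by (intro add_mono bound) (use a in auto)
      finally show ?thesis by simp
    qed
    have "S = 0"
    proof (rule ccontr)
      assume "S \<noteq> 0" hence Sp: "S > 0" using Snn by simp
      obtain N :: nat where "real N > 2 * (\<integral>x. T x \<partial>lborel) / S" using reals_Archimedean2 by blast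
      hence "real N * S > 2 * (\<integral>x. T x \<partial>lborel)" using Sp by (simp add: field_simps)
      thus False using NS[of N] by simp
    qed
    hence "AE x in lborel. T x * indicator I x = 0"
      unfolding S_def using intI[of 0]
      by (subst integral_nonneg_eq_0_iff_AE[symmetric]) (auto simp: Tnn)
    thus ?thesis by eventually_elim (auto simp: I_def indicator_def)
  qed
  have "AE x in lborel. \<forall>j::int. x \<in> {j..<j+1} \<longrightarrow> T x = 0"
    using zero by (subst AE_all_countable) auto
  thus ?thesis
  proof eventually_elim
    case (elim x)
    have "x \<in> {real_of_int \<lfloor>x\<rfloor>..<real_of_int \<lfloor>x\<rfloor> + 1}" by simp
    thus ?case using elim by blast
  qed
qed



lemma cis_level_countable: "countable {x::real. cis (2*pi*x) = r}"
proof (cases "{x::real. cis (2*pi*x) = r} = {}")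
  case False
  then obtain x0 where x0: "cis (2*pi*x0) = r" by auto
  have "{x::real. cis (2*pi*x) = r} \<subseteq> range (\<lambda>n::int. x0 + of_int n)"
  proof
    fix x assume "x \<in> {x::real. cis (2*pi*x) = r}"
    hence "exp (\<i> * complex_of_real (2*pi*x)) = exp (\<i> * complex_of_real (2*pi*x0))"
      using x0 by (simp add: cis_conv_exp)
    then obtain n :: int where n: "\<i> * complex_of_real (2*pi*x) = \<i> * complex_of_real (2*pi*x0) + (of_int (2 * n) * pi) * \<i>"
      by (auto simp: exp_eq)
    hence "\<i> * complex_of_real (2*pi*x) = \<i> * complex_of_real (2*pi*x0 + 2 * n * pi)"
      by (simp add: algebra_simps)
    hence "complex_of_real (2*pi*x) = complex_of_real (2*pi*x0 + 2 * n * pi)"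
      by (simp only: mult_cancel_left) simp
    hence "2*pi*x = 2*pi*x0 + 2*n*pi" using of_real_eq_iff by blast
    hence "pi * (2*x) = pi * (2*(x0 + n))" by (simp add: algebra_simps)
    hence "x = x0 + n" by simp
    thus "x \<in> range (\<lambda>n::int. x0 + of_int n)" by auto
  qed
  thus ?thesis by (rule countable_subset) simp
qed simp

lemma cis_pow: "cis (2*pi*x) ^ n = cis (2*pi*real n*x)"
  by (simp add: Complex.DeMoivre mult_ac)

lemma poly_cis_null:
  fixes p :: "complex poly"
  assumes "p \<noteq> 0"
  shows "AE x in lborel. poly p (cis (2*pi*x)) \<noteq> 0"
proof -
  have fin: "finite {z. poly p z = 0}" using poly_roots_finite[OF assms] .
  have "{x::real. poly p (cis (2*pi*x)) = 0} = (\<Union>r\<in>{z. poly p z = 0}. {x. cis (2*pi*x) = r})" by auto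
  also have "countable \<dots>" using fin by (intro countable_UN countable_finite cis_level_countable) auto
  finally have "{x::real. poly p (cis (2*pi*x)) = 0} \<in> null_sets lborel"
    by (rule countable_imp_null_set_lborel)
  thus ?thesis by (rule AE_I') auto
qed

lemma trig3_AE:
  fixes c1 c2 c3 :: complex and b :: int
  assumes b: "b \<noteq> 0" "b \<noteq> 1" and nz: "\<not> (c1 = 0 \<and> c2 = 0 \<and> c3 = 0)"
  shows "AE x in lborel. c1 + c2 * cis (2*pi*x) + c3 * cis (2*pi*b*x) \<noteq> 0"
proof (cases "b \<ge> 2")
  case True
  define n where "n = nat b"
  have n: "n \<ge> 2" "b = int n" using True by (auto simp: n_def)
  define p where "p = [:c1, c2:] + monom c3 n"
  have "coeff p 0 = c1" "coeff p 1 = c2" "coeff p n = c3" using n by (auto simp: p_def coeff_monom coeff_pCons split: nat.split)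
  hence "p \<noteq> 0" using nz by auto
  have ev: "poly p (cis (2*pi*x)) = c1 + c2 * cis (2*pi*x) + c3 * cis (2*pi*b*x)" for x
    by (simp add: p_def poly_monom Complex.DeMoivre n algebra_simps)
  show ?thesis using poly_cis_null[OF \<open>p \<noteq> 0\<close>] by (simp add: ev)
next
  case False
  hence bn: "b \<le> -1" using b by auto
  define m where "m = nat (-b)"
  have m: "m \<ge> 1" "b = - int m" using bn by (auto simp: m_def)
  define p where "p = monom c1 m + monom c2 (m+1) + [:c3:]"
  have "coeff p 0 = c3" "coeff p m = c1" "coeff p (m+1) = c2" using m by (auto simp: p_def coeff_monom coeff_pCons split: nat.split)
  hence "p \<noteq> 0" using nz by auto
  have ev: "poly p (cis (2*pi*x)) = cis (2*pi*x) ^ m * (c1 + c2 * cis (2*pi*x) + c3 * cis (2*pi*b*x))" for x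
  proof -
    have "cis (2*pi*x) ^ m * cis (2*pi*b*x) = 1"
      by (simp add: Complex.DeMoivre m cis_mult algebra_simps)
    thus ?thesis by (simp add: p_def poly_monom algebra_simps)
  qed
  show ?thesis using poly_cis_null[OF \<open>p \<noteq> 0\<close>] by (simp add: ev)
qed

lemma trig2_AE:
  fixes c1 c2 :: complex
  assumes nz: "\<not> (c1 = 0 \<and> c2 = 0)"
  shows "AE x in lborel. c1 + c2 * cis (2*pi*x) \<noteq> 0"
  using trig3_AE[of 2 c1 c2 0] nz by simp



lemma cnj_meas[measurable]:
  assumes [measurable]: "f \<in> borel_measurable M"
  shows "(\<lambda>x. cnj (f x)) \<in> borel_measurable M"
proof -
  have "(\<lambda>x. cnj (f x)) = (\<lambda>x. complex_of_real (Re (f x)) - \<i> * complex_of_real (Im (f x)))"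
    by (auto simp: complex_eq_iff)
  also have "\<dots> \<in> borel_measurable M" by measurable
  finally show ?thesis .
qed

lemma alg0:
  fixes a A u1 u2 U1 U2 e :: complex
  assumes "e * (1 - a*A) = 1"
  shows "(-(U1 - A*U2)*e) * (-(u1 - a*u2)*e) * 1 + (-(U1 - A*U2)*e) * (-(u2 - A*u1)*e) * a + (-(U1 - A*U2)*e) * 1 * u1
       + (-(U2 - a*U1)*e) * (-(u1 - a*u2)*e) * A + (-(U2 - a*U1)*e) * (-(u2 - A*u1)*e) * 1 + (-(U2 - a*U1)*e) * 1 * u2
       + 1 * (-(u1 - a*u2)*e) * U1 + 1 * (-(u2 - A*u1)*e) * U2 + 1 * 1 * 1
     = 1 - ((u1 - a*u2)*U1 + (u2 - A*u1)*U2)*e"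
  using assms by algebra

lemma alg:
  fixes a A u1 u2 U1 U2 d :: complex
  assumes "d \<noteq> 0" "d = 1 - a*A"
  shows "(-(U1 - A*U2)/d) * (-(u1 - a*u2)/d) * 1 + (-(U1 - A*U2)/d) * (-(u2 - A*u1)/d) * a + (-(U1 - A*U2)/d) * 1 * u1
       + (-(U2 - a*U1)/d) * (-(u1 - a*u2)/d) * A + (-(U2 - a*U1)/d) * (-(u2 - A*u1)/d) * 1 + (-(U2 - a*U1)/d) * 1 * u2
       + 1 * (-(u1 - a*u2)/d) * U1 + 1 * (-(u2 - A*u1)/d) * U2 + 1 * 1 * 1
     = 1 - ((u1 - a*u2)*U1 + (u2 - A*u1)*U2)/d"
  unfolding divide_inverse by (rule alg0) (use assms in simp)

lemma sum9:
  "(\<Sum>i\<in>{0,1,2::nat}. \<Sum>j\<in>{0,1,2::nat}. c i * cnj (c j) * T i j) =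
    c 0 * cnj (c 0) * T 0 0 + c 0 * cnj (c 1) * T 0 1 + c 0 * cnj (c 2) * T 0 2
  + c 1 * cnj (c 0) * T 1 0 + c 1 * cnj (c 1) * T 1 1 + c 1 * cnj (c 2) * T 1 2
  + c 2 * cnj (c 0) * T 2 0 + c 2 * cnj (c 1) * T 2 1 + c 2 * cnj (c 2) * T 2 2"
  by (simp add: algebra_simps)

lemma quad_expand:
  fixes F :: "'i \<Rightarrow> real \<Rightarrow> complex" and c :: "'i \<Rightarrow> complex"
  assumes fin: "finite I" and int: "\<And>i j. i \<in> I \<Longrightarrow> j \<in> I \<Longrightarrow> integrable lborel (\<lambda>x. F i x * cnj (F j x))"
  shows "(\<integral>x. (\<Sum>i\<in>I. c i * F i x) * cnj (\<Sum>j\<in>I. c j * F j x) \<partial>lborel)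
       = (\<Sum>i\<in>I. \<Sum>j\<in>I. c i * cnj (c j) * (\<integral>x. F i x * cnj (F j x) \<partial>lborel))"
proof -
  have pw: "(\<Sum>i\<in>I. c i * F i x) * cnj (\<Sum>j\<in>I. c j * F j x) =
      (\<Sum>i\<in>I. \<Sum>j\<in>I. c i * cnj (c j) * (F i x * cnj (F j x)))" for x
    by (simp add: cnj_sum sum_product mult_ac)
  have "(\<integral>x. (\<Sum>i\<in>I. c i * F i x) * cnj (\<Sum>j\<in>I. c j * F j x) \<partial>lborel)
      = (\<integral>x. (\<Sum>i\<in>I. \<Sum>j\<in>I. c i * cnj (c j) * (F i x * cnj (F j x))) \<partial>lborel)"
    by (simp only: pw)
  also have "\<dots> = (\<Sum>i\<in>I. \<integral>x. (\<Sum>j\<in>I. c i * cnj (c j) * (F i x * cnj (F j x))) \<partial>lborel)"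
    by (rule Bochner_Integration.integral_sum) (auto intro!: Bochner_Integration.integrable_sum int)
  also have "\<dots> = (\<Sum>i\<in>I. \<Sum>j\<in>I. \<integral>x. c i * cnj (c j) * (F i x * cnj (F j x)) \<partial>lborel)"
    by (intro sum.cong refl Bochner_Integration.integral_sum) (auto intro!: int)
  also have "\<dots> = (\<Sum>i\<in>I. \<Sum>j\<in>I. c i * cnj (c j) * (\<integral>x. F i x * cnj (F j x) \<partial>lborel))"
    by (intro sum.cong refl integral_mult_right_zero)
  finally show ?thesis .
qed

definition V :: "(real \<Rightarrow> real) \<Rightarrow> real \<Rightarrow> real \<Rightarrow> nat \<Rightarrow> real \<Rightarrow> complex" where
  "V g a b i x = (if i = 0 then of_real (g x) else if i = 1 then cis (2*pi*x) * of_real (g x)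
                  else cis (2*pi*b*x) * of_real (g (x - a)))"

locale gctx =
  fixes g :: "real \<Rightarrow> real"
  assumes meas: "g \<in> borel_measurable lborel"
    and L2: "integrable lborel (\<lambda>x. (g x)\<^sup>2)"
    and norm1: "(\<integral>x. (g x)\<^sup>2 \<partial>lborel) = 1"
begin

lemma gm[measurable]: "g \<in> borel_measurable borel" using meas by simp

lemma cis_meas[measurable]: "f \<in> borel_measurable M \<Longrightarrow> (\<lambda>x. cis (f x)) \<in> borel_measurable M"
  unfolding cis_conv_exp by measurable

lemma sq_shift_int: "integrable lborel (\<lambda>x. (g (x - s))\<^sup>2)"
  using lborel_integrable_real_affine[OF L2, of 1 "-s"] by simp

lemma sq_shift: "(\<integral>x. (g (x - s))\<^sup>2 \<partial>lborel) = 1"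
  using lborel_integral_real_affine[of 1 "\<lambda>x. (g x)\<^sup>2" "-s"] norm1 by simp

lemma not_AE_zero: "\<not> (AE x in lborel. g x = 0)"
proof
  assume "AE x in lborel. g x = 0"
  hence z: "AE x in lborel. (g x)\<^sup>2 = 0" by eventually_elim simp
  have "(\<integral>x. (g x)\<^sup>2 \<partial>lborel) = 0" by (rule integral_eq_zero_AE[OF z])
  thus False using norm1 by simp
qed

lemma cis_int_period: "cis (2*pi*(x + of_int k)) = cis (2*pi*x)"
proof -
  have "cis (2 * pi * of_int k) = 1" by (simp add: cis.ctr complex_eq_iff)
  thus ?thesis by (simp add: distrib_left cis_mult[symmetric])
qed

lemma indep:
  fixes a b :: int and c1 c2 c3 :: complex
  assumes ab: "(a, b) \<notin> {(0, 0), (0, 1)}"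
    and eq: "AE x in lborel. c1 * of_real (g x) + c2 * cis (2 * pi * x) * of_real (g x)
                + c3 * cis (2 * pi * of_int b * x) * of_real (g (x - of_int a)) = 0"
  shows "c1 = 0 \<and> c2 = 0 \<and> c3 = 0"
proof (cases "a = 0")
  case True
  hence b: "b \<noteq> 0" "b \<noteq> 1" using ab by auto
  show ?thesis
  proof (rule ccontr)
    assume nz: "\<not> (c1 = 0 \<and> c2 = 0 \<and> c3 = 0)"
    have "AE x in lborel. g x = 0"
      using trig3_AE[OF b nz] eq
    proof eventually_elim
      case (elim x)
      have "(c1 + c2 * cis (2*pi*x) + c3 * cis (2*pi*b*x)) * of_real (g x) = 0"
        using elim(2) True by (simp add: algebra_simps)
      thus ?case using elim(1) by simp
    qed
    thus False using not_AE_zero by simp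
  qed
next
  case False
  have c3: "c3 = 0"
  proof (rule ccontr)
    assume c3: "c3 \<noteq> 0"
    define \<phi> where "\<phi> x = (cmod (c1 + c2 * cis (2*pi*x)))\<^sup>2 / (cmod c3)\<^sup>2" for x
    have [measurable]: "\<phi> \<in> borel_measurable borel" unfolding \<phi>_def by measurable
    have "AE x in lborel. (g x)\<^sup>2 = 0"
    proof (rule periodic_null[where \<phi>=\<phi> and a="of_int a"])
      show "(\<lambda>x. (g x)\<^sup>2) \<in> borel_measurable borel" by measurable
      show "\<phi> \<in> borel_measurable borel" by measurable
      show "integrable lborel (\<lambda>x. (g x)\<^sup>2)" by (rule L2)
      show "\<And>x. 0 \<le> (g x)\<^sup>2" by simp
      show "\<And>x. 0 \<le> \<phi> x" by (simp add: \<phi>_def)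
      show "1 \<le> \<bar>real_of_int a\<bar>" using False by linarith
      show "\<And>x. \<phi> (x + real_of_int a) = \<phi> x" by (simp add: \<phi>_def cis_int_period)
      show "AE x in lborel. (g (x - real_of_int a))\<^sup>2 = \<phi> x * (g x)\<^sup>2"
        using eq
      proof eventually_elim
        case (elim x)
        have "c3 * cis (2 * pi * of_int b * x) * of_real (g (x - of_int a)) = - ((c1 + c2 * cis (2*pi*x)) * of_real (g x))"
          using elim by (simp add: algebra_simps add_eq_0_iff)
        hence "cmod (c3 * cis (2 * pi * of_int b * x) * of_real (g (x - of_int a))) = cmod ((c1 + c2 * cis (2*pi*x)) * of_real (g x))"
          by (metis norm_minus_cancel)
        hence "cmod c3 * \<bar>g (x - of_int a)\<bar> = cmod (c1 + c2 * cis (2*pi*x)) * \<bar>g x\<bar>"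
          by (simp add: norm_mult)
        hence "(cmod c3 * \<bar>g (x - of_int a)\<bar>)\<^sup>2 = (cmod (c1 + c2 * cis (2*pi*x)) * \<bar>g x\<bar>)\<^sup>2" by simp
        hence "(cmod c3)\<^sup>2 * (g (x - of_int a))\<^sup>2 = (cmod (c1 + c2 * cis (2*pi*x)))\<^sup>2 * (g x)\<^sup>2"
          by (simp add: power_mult_distrib)
        thus ?case using c3 by (simp add: \<phi>_def field_simps)
      qed
    qed
    hence "AE x in lborel. g x = 0" by eventually_elim simp
    thus False using not_AE_zero by simp
  qed
  have c12: "c1 = 0 \<and> c2 = 0"
  proof (rule ccontr)
    assume nz: "\<not> (c1 = 0 \<and> c2 = 0)"
    have "AE x in lborel. g x = 0"
      using trig2_AE[OF nz] eq
    proof eventually_elim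
      case (elim x)
      have "(c1 + c2 * cis (2*pi*x)) * of_real (g x) = 0"
        using elim(2) c3 by (simp add: algebra_simps)
      thus ?case using elim(1) by simp
    qed
    thus False using not_AE_zero by simp
  qed
  show ?thesis using c3 c12 by simp
qed


lemma V_meas[measurable]: "V g a b i \<in> borel_measurable borel"
  unfolding V_def by measurable

lemma V_norm: "cmod (V g a b i x) = \<bar>g (x - (if i = 0 \<or> i = 1 then 0 else a))\<bar>"
  by (simp add: V_def norm_mult)

lemma abs_mult_le_sq: "\<bar>u::real\<bar> * \<bar>v\<bar> \<le> u\<^sup>2 + v\<^sup>2"
proof -
  have "0 \<le> (\<bar>u\<bar> - \<bar>v\<bar>)\<^sup>2" by simp
  hence "2 * (\<bar>u\<bar> * \<bar>v\<bar>) \<le> u\<^sup>2 + v\<^sup>2" by (simp add: power2_eq_square algebra_simps)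
  moreover have "0 \<le> \<bar>u\<bar> * \<bar>v\<bar>" by simp
  ultimately show ?thesis by linarith
qed

lemma V_int: "integrable lborel (\<lambda>x. V g a b i x * cnj (V g a b j x))"
proof (rule Bochner_Integration.integrable_bound)
  define s where "s k = (if k = 0 \<or> k = 1 then 0 else a)" for k :: nat
  show "integrable lborel (\<lambda>x. (g (x - s i))\<^sup>2 + (g (x - s j))\<^sup>2)"
    by (intro Bochner_Integration.integrable_add sq_shift_int)
  show "(\<lambda>x. V g a b i x * cnj (V g a b j x)) \<in> borel_measurable lborel" by measurable
  show "AE x in lborel. norm (V g a b i x * cnj (V g a b j x)) \<le> norm ((g (x - s i))\<^sup>2 + (g (x - s j))\<^sup>2)"
  proof (rule AE_I2)
    fix x
    have "norm (V g a b i x * cnj (V g a b j x)) = \<bar>g (x - s i)\<bar> * \<bar>g (x - s j)\<bar>"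
      by (simp add: norm_mult V_norm s_def)
    also have "\<dots> \<le> (g (x - s i))\<^sup>2 + (g (x - s j))\<^sup>2" by (rule abs_mult_le_sq)
    finally show "norm (V g a b i x * cnj (V g a b j x)) \<le> norm ((g (x - s i))\<^sup>2 + (g (x - s j))\<^sup>2)"
      by simp
  qed
qed

definition IP :: "real \<Rightarrow> real \<Rightarrow> nat \<Rightarrow> nat \<Rightarrow> complex" where
  "IP a b i j = (\<integral>x. V g a b i x * cnj (V g a b j x) \<partial>lborel)"

abbreviation G :: "real \<Rightarrow> complex" where "G \<equiv> (\<lambda>t. of_real (g t))"

lemma IP_swap: "IP a b j i = cnj (IP a b i j)"
  unfolding IP_def Bochner_Integration.integral_cnj[symmetric] by (simp add: mult.commute)

lemma IP00: "IP a b 0 0 = 1"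
proof -
  have "IP a b 0 0 = (\<integral>x. complex_of_real ((g x)\<^sup>2) \<partial>lborel)"
    unfolding IP_def by (intro arg_cong[where f="integral\<^sup>L lborel"] ext) (simp add: V_def power2_eq_square)
  also have "\<dots> = complex_of_real (\<integral>x. ((g x)\<^sup>2) \<partial>lborel)" by (rule integral_complex_of_real)
  finally show ?thesis using norm1 by simp
qed

lemma IP11: "IP a b 1 1 = 1"
proof -
  have "IP a b 1 1 = (\<integral>x. complex_of_real ((g x)\<^sup>2) \<partial>lborel)"
    unfolding IP_def by (intro arg_cong[where f="integral\<^sup>L lborel"] ext)
       (simp add: V_def power2_eq_square cis_cnj cis_mult)
  also have "\<dots> = complex_of_real (\<integral>x. ((g x)\<^sup>2) \<partial>lborel)" by (rule integral_complex_of_real)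
  finally show ?thesis using norm1 by simp
qed

lemma IP22: "IP a b 2 2 = 1"
proof -
  have "IP a b 2 2 = (\<integral>x. complex_of_real ((g (x - a))\<^sup>2) \<partial>lborel)"
    unfolding IP_def by (intro arg_cong[where f="integral\<^sup>L lborel"] ext)
       (simp add: V_def power2_eq_square cis_cnj cis_mult)
  also have "\<dots> = complex_of_real (\<integral>x. ((g (x - a))\<^sup>2) \<partial>lborel)" by (rule integral_complex_of_real)
  finally show ?thesis using sq_shift by simp
qed

lemma IP01: "IP a b 0 1 = stft G G 0 1"
  unfolding IP_def stft_def by (intro arg_cong[where f="integral\<^sup>L lborel"] ext)
       (simp add: V_def cis_cnj mult_ac)

lemma IP02: "IP a b 0 2 = stft G G a b"
  unfolding IP_def stft_def by (intro arg_cong[where f="integral\<^sup>L lborel"] ext)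
       (simp add: V_def cis_cnj mult_ac)

lemma IP12: "IP a b 1 2 = stft G G a (b - 1)"
  unfolding IP_def stft_def
proof (intro arg_cong[where f="integral\<^sup>L lborel"] ext)
  fix x
  have "cis (2*pi*x) * cis (- (2*pi*b*x)) = cis (- 2 * pi * (b - 1) * x)"
    by (simp add: cis_mult algebra_simps)
  thus "V g a b 1 x * cnj (V g a b 2 x) = G x * cnj (G (x - a)) * cis (- 2 * pi * (b - 1) * x)"
    by (simp add: V_def cis_cnj)
qed


lemma hnorm:
  fixes c :: "nat \<Rightarrow> complex"
  shows "\<exists>N\<ge>0. (\<Sum>i\<in>{0,1,2::nat}. \<Sum>j\<in>{0,1,2::nat}. c i * cnj (c j) * IP a b i j) = complex_of_real N
      \<and> (N = 0 \<longrightarrow> (AE x in lborel. (\<Sum>i\<in>{0,1,2::nat}. c i * V g a b i x) = 0))"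
proof -
  define h where "h x = (\<Sum>i\<in>{0,1,2::nat}. c i * V g a b i x)" for x
  have Q: "(\<integral>x. h x * cnj (h x) \<partial>lborel) = (\<Sum>i\<in>{0,1,2::nat}. \<Sum>j\<in>{0,1,2::nat}. c i * cnj (c j) * IP a b i j)"
    unfolding h_def IP_def by (rule quad_expand) (auto intro: V_int)
  have pw: "h x * cnj (h x) = (\<Sum>i\<in>{0,1,2::nat}. \<Sum>j\<in>{0,1,2::nat}. c i * cnj (c j) * (V g a b i x * cnj (V g a b j x)))" for x
    unfolding h_def cnj_sum sum_product complex_cnj_mult by (intro sum.cong refl) (simp add: mult_ac)
  have inth: "integrable lborel (\<lambda>x. h x * cnj (h x))"
    unfolding pw by (intro Bochner_Integration.integrable_sum integrable_mult_right V_int)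
  have sq: "h x * cnj (h x) = complex_of_real ((cmod (h x))\<^sup>2)" for x
    by (rule complex_norm_square[symmetric])
  define N where "N = (\<integral>x. (cmod (h x))\<^sup>2 \<partial>lborel)"
  have intN: "integrable lborel (\<lambda>x. (cmod (h x))\<^sup>2)"
    using integrable_Re[OF inth] by (simp add: sq)
  have "(\<integral>x. h x * cnj (h x) \<partial>lborel) = complex_of_real N"
    unfolding sq N_def by (rule integral_complex_of_real)
  moreover have "N \<ge> 0" unfolding N_def by (intro integral_nonneg_AE AE_I2) simp
  moreover have "N = 0 \<longrightarrow> (AE x in lborel. h x = 0)"
  proof
    assume "N = 0"
    hence "AE x in lborel. (cmod (h x))\<^sup>2 = 0"
      unfolding N_def using intN by (subst (asm) integral_nonneg_eq_0_iff_AE) auto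
    thus "AE x in lborel. h x = 0" by eventually_elim simp
  qed
  ultimately show ?thesis using Q unfolding h_def by metis
qed

lemma Ffun_eq:
  assumes "d = 1 - stft G G 0 1 * cnj (stft G G 0 1)" "d \<noteq> 0"
  shows "Ffun g a b = ((stft G G a b - stft G G 0 1 * stft G G a (b-1)) * cnj (stft G G a b)
          + (stft G G a (b-1) - cnj (stft G G 0 1) * stft G G a b) * cnj (stft G G a (b-1))) / d"
  unfolding Ffun_def uvec_def Let_def by (rule F_formula[OF assms])

lemma dpos: "\<exists>D>0. 1 - stft G G 0 1 * cnj (stft G G 0 1) = complex_of_real D"
proof -
  define \<alpha> where "\<alpha> = stft G G 0 1"
  define c :: "nat \<Rightarrow> complex" where "c i = (if i = 0 then - cnj \<alpha> else if i = 1 then 1 else 0)" for i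
  obtain N where N: "N \<ge> 0" "(\<Sum>i\<in>{0,1,2::nat}. \<Sum>j\<in>{0,1,2::nat}. c i * cnj (c j) * IP 1 0 i j) = complex_of_real N"
     "N = 0 \<longrightarrow> (AE x in lborel. (\<Sum>i\<in>{0,1,2::nat}. c i * V g 1 0 i x) = 0)"
    using hnorm[of c 1 0] by blast
  have "(\<Sum>i\<in>{0,1,2::nat}. \<Sum>j\<in>{0,1,2::nat}. c i * cnj (c j) * IP 1 0 i j) = 1 - \<alpha> * cnj \<alpha>"
    unfolding sum9 using IP11[of 1 0] IP01[of 1 0, folded \<alpha>_def] IP_swap[of 1 0 1 0]
    by (simp add: c_def IP00 IP01[folded \<alpha>_def] algebra_simps)
  moreover have "N \<noteq> 0"
  proof
    assume "N = 0"
    hence "AE x in lborel. (\<Sum>i\<in>{0,1,2::nat}. c i * V g 1 0 i x) = 0" using N by simp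
    hence "AE x in lborel. (- cnj \<alpha>) * of_real (g x) + 1 * cis (2 * pi * x) * of_real (g x)
                + 0 * cis (2 * pi * of_int 0 * x) * of_real (g (x - of_int 1)) = 0"
      by eventually_elim (simp add: c_def V_def)
    from indep[OF _ this] show False by simp
  qed
  ultimately show ?thesis using N unfolding \<alpha>_def by (intro exI[of _ N]) auto
qed

end

lemma (in gctx) V00: "V g 0 0 2 x = V g 0 0 0 x" by (simp add: V_def)

lemma (in gctx) stft00: "stft G G 0 0 = 1"
proof -
  have "stft G G 0 0 = IP 0 0 0 2" using IP02[of 0 0] by simp
  also have "\<dots> = IP 0 0 0 0" unfolding IP_def by (simp only: V00)
  finally show ?thesis using IP00 by simp
qed

lemma (in gctx) stft0m1: "stft G G 0 (-1) = cnj (stft G G 0 1)"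
proof -
  have "stft G G 0 (-1) = IP 0 0 1 2" using IP12[of 0 0] by simp
  also have "\<dots> = IP 0 0 1 0" unfolding IP_def by (simp only: V00)
  also have "\<dots> = cnj (IP 0 0 0 1)" by (rule IP_swap)
  finally show ?thesis using IP01[of 0 0] by simp
qed

theorem proposition2p5:
  fixes g :: "real \<Rightarrow> real"
  assumes meas: "g \<in> borel_measurable lborel"
    and L2: "integrable lborel (\<lambda>x. (g x)\<^sup>2)"
    and norm1: "(\<integral>x. (g x)\<^sup>2 \<partial>lborel) = 1"
  shows "Ffun g 0 0 = 1 \<and> Ffun g 0 1 = 1
    \<and> (\<forall>a b :: int. (a, b) \<notin> {(0, 0), (0, 1)} \<longrightarrow>
          Ffun g (of_int a) (of_int b) \<in> \<real> \<and> Re (Ffun g (of_int a) (of_int b)) < 1)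
    \<and> (\<forall>a b :: int. (a, b) \<notin> {(0, 0), (0, 1)} \<longrightarrow>
          (\<forall>c1 c2 c3 :: complex.
             (AE x in lborel. c1 * of_real (g x) + c2 * cis (2 * pi * x) * of_real (g x)
                + c3 * cis (2 * pi * of_int b * x) * of_real (g (x - of_int a)) = 0)
             \<longrightarrow> c1 = 0 \<and> c2 = 0 \<and> c3 = 0))"
proof -
  interpret gctx g using assms by unfold_locales
  define \<alpha> where "\<alpha> = stft G G 0 1"
  define d where "d = 1 - \<alpha> * cnj \<alpha>"
  obtain D where D: "D > 0" "d = complex_of_real D" using dpos unfolding d_def \<alpha>_def by blast
  have dnz: "d \<noteq> 0" using D by simp
  have cd: "cnj d = d" using D by simp
  have FE: "Ffun g a b = ((stft G G a b - \<alpha> * stft G G a (b-1)) * cnj (stft G G a b)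
          + (stft G G a (b-1) - cnj \<alpha> * stft G G a b) * cnj (stft G G a (b-1))) / d" for a b
    unfolding \<alpha>_def by (rule Ffun_eq) (use dnz in \<open>auto simp: d_def \<alpha>_def\<close>)
  have P1: "Ffun g 0 0 = 1"
    unfolding FE using stft00 stft0m1 dnz by (simp add: \<alpha>_def d_def field_simps)
  have P2: "Ffun g 0 1 = 1"
    unfolding FE using stft00 dnz by (simp add: \<alpha>_def d_def field_simps)
  have P3: "Ffun g (of_int a) (of_int b) \<in> \<real> \<and> Re (Ffun g (of_int a) (of_int b)) < 1"
    if ab: "(a, b) \<notin> {(0, 0), (0, 1)}" for a b :: int
  proof -
    define A where "A = real_of_int a"
    define B where "B = real_of_int b"
    define u1 where "u1 = stft G G A B"
    define u2 where "u2 = stft G G A (B - 1)"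
    define c :: "nat \<Rightarrow> complex" where
      "c i = (if i = 0 then -(cnj u1 - cnj \<alpha> * cnj u2)/d else if i = 1 then -(cnj u2 - \<alpha> * cnj u1)/d else 1)" for i
    have c0: "c 0 = -(cnj u1 - cnj \<alpha> * cnj u2)/d" and c1: "c 1 = -(cnj u2 - \<alpha> * cnj u1)/d"
      and c2: "c 2 = 1" by (simp_all add: c_def)
    have cc0: "cnj (-(cnj u1 - cnj \<alpha> * cnj u2)/d) = -(u1 - \<alpha> * u2)/d"
      and cc1: "cnj (-(cnj u2 - \<alpha> * cnj u1)/d) = -(u2 - cnj \<alpha> * u1)/d"
      and cc2: "cnj (1::complex) = 1" by (simp_all add: cd)
    have T01: "IP A B 0 1 = \<alpha>" using IP01 unfolding \<alpha>_def by simp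
    have T10: "IP A B 1 0 = cnj \<alpha>" using IP_swap[of A B 1 0] T01 by simp
    have T02: "IP A B 0 2 = u1" using IP02 unfolding u1_def by simp
    have T12: "IP A B 1 2 = u2" using IP12 unfolding u2_def by simp
    have T20: "IP A B 2 0 = cnj u1" using IP_swap[of A B 2 0] T02 by simp
    have T21: "IP A B 2 1 = cnj u2" using IP_swap[of A B 2 1] T12 by simp
    obtain N where N: "N \<ge> 0" "(\<Sum>i\<in>{0,1,2::nat}. \<Sum>j\<in>{0,1,2::nat}. c i * cnj (c j) * IP A B i j) = complex_of_real N"
       "N = 0 \<longrightarrow> (AE x in lborel. (\<Sum>i\<in>{0,1,2::nat}. c i * V g A B i x) = 0)"
      using hnorm[of c A B] by blast
    have eqS: "(\<Sum>i\<in>{0,1,2::nat}. \<Sum>j\<in>{0,1,2::nat}. c i * cnj (c j) * IP A B i j)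
        = 1 - ((u1 - \<alpha>*u2)*cnj u1 + (u2 - cnj \<alpha>*u1)*cnj u2)/d"
      unfolding sum9
      apply (simp only: c0 c1 c2 cc0 cc1 cc2 T01 T10 T02 T12 T20 T21 IP00 IP11 IP22)
      by (rule alg[OF dnz]) (simp add: d_def)
    have FX: "Ffun g A B = ((u1 - \<alpha>*u2)*cnj u1 + (u2 - cnj \<alpha>*u1)*cnj u2)/d"
      unfolding FE u1_def u2_def ..
    have X: "((u1 - \<alpha>*u2)*cnj u1 + (u2 - cnj \<alpha>*u1)*cnj u2)/d = 1 - complex_of_real N"
    proof -
      have h: "1 - ((u1 - \<alpha>*u2)*cnj u1 + (u2 - cnj \<alpha>*u1)*cnj u2)/d = complex_of_real N"
        by (rule trans[OF eqS[symmetric] N(2)])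
      show ?thesis by (simp only: h[symmetric]) simp
    qed
    have FN: "Ffun g A B = complex_of_real (1 - N)" using FX X by simp
    have "N \<noteq> 0"
    proof
      assume "N = 0"
      hence "AE x in lborel. (\<Sum>i\<in>{0,1,2::nat}. c i * V g A B i x) = 0" using N by simp
      hence "AE x in lborel. c 0 * of_real (g x) + c 1 * cis (2 * pi * x) * of_real (g x)
                + c 2 * cis (2 * pi * of_int b * x) * of_real (g (x - of_int a)) = 0"
        by eventually_elim (simp add: V_def A_def B_def mult.assoc add.assoc)
      from indep[OF ab this] show False using c2 by simp
    qed
    hence "N > 0" using N(1) by simp
    thus ?thesis using FN unfolding A_def B_def by simp
  qed
  show ?thesis using P1 P2 P3 indep by blast
qed

end
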